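(* Let $p$ be a prime and $m\ge0$. For $d\ge0$ write $d=q^{(m)}_dp^m+r$ with $0\le r<p^m$. Let $x,y$ be the standard coordinates on $\mathbb{P}^1$ with $xy=1$, and put $\partial_x^{\langle d\rangle_{(m)}}=\frac{q^{(m)}_d!}{d!}\partial_x^d$ and $\partial_y^{\langle d\rangle_{(m)}}=\frac{q^{(m)}_d!}{d!}\partial_y^d$. Then for every $s\ge1$ $$\partial_y^{\langle s\rangle_{(m)}}=(-1)^s\sum_{t=1}^sa^{(m)}_{s,t}x^{s+t}\partial_x^{\langle t\rangle_{(m)}},\qquad a^{(m)}_{s,t}=\binom{s}{t}\frac{(s-1)!}{(t-1)!}\frac{q^{(m)}_s!}{s!}\Big(\frac{q^{(m)}_t!}{t!}\Big)^{-1}=\binom{s-1}{t-1}\frac{q^{(m)}_s!}{q^{(m)}_t!}.$$ These numbers are integers, and $a^{(m)}_{s,1}=q^{(m)}_s!$, $a^{(m)}_{s,s}=1$. *)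

theory Defs
  imports "HOL-Analysis.Analysis" "HOL-Computational_Algebra.Primes"
begin

definition qd :: "nat \<Rightarrow> nat \<Rightarrow> nat \<Rightarrow> nat" where
  "qd p m d = d div (p ^ m)"

definition dop :: "nat \<Rightarrow> nat \<Rightarrow> nat \<Rightarrow> (real \<Rightarrow> real) \<Rightarrow> real \<Rightarrow> real" where
  "dop p m d g z = (fact (qd p m d) / fact d) * (deriv ^^ d) g z"

definition acoef :: "nat \<Rightarrow> nat \<Rightarrow> nat \<Rightarrow> nat \<Rightarrow> real" where
  "acoef p m s t = real (s choose t) * (fact (s - 1) / fact (t - 1))
      * (fact (qd p m s) / fact s) / (fact (qd p m t) / fact t)"

end

theory Submission
  imports Defs
begin

fun lah :: "nat \<Rightarrow> nat \<Rightarrow> nat" where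
  "lah 0 0 = 1"
| "lah 0 (Suc k) = 0"
| "lah (Suc n) 0 = 0"
| "lah (Suc n) (Suc k) = (n + Suc k) * lah n (Suc k) + lah n k"

lemma lah_big: "k > n \<Longrightarrow> lah n k = 0"
proof (induction n arbitrary: k)
  case 0 then show ?case by (cases k) auto
next
  case (Suc n) then show ?case by (cases k) auto
qed

lemma lah_zero: "n * lah n 0 = 0"
  by (cases n) auto

lemma lah_shift:
  fixes X :: "nat \<Rightarrow> real"
  shows "(\<Sum>t=0..Suc n. real (lah (Suc n) t) * X t)
       = (\<Sum>t=0..n. real (lah n t) * ((real n + real t) * X t + X (Suc t)))"
proof -
  have A: "(\<Sum>t=0..Suc n. real (lah (Suc n) t) * X t)
     = (\<Sum>t=0..n. (real n + real (Suc t)) * real (lah n (Suc t)) * X (Suc t))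
       + (\<Sum>t=0..n. real (lah n t) * X (Suc t))"
  proof -
    have "(\<Sum>t=0..Suc n. real (lah (Suc n) t) * X t)
        = (\<Sum>t=0..n. real (lah (Suc n) (Suc t)) * X (Suc t))"
      by (subst sum.atLeast0_atMost_Suc_shift) (simp del: sum.cl_ivl_Suc lah.simps add: lah.simps(3))
    also have "\<dots> = (\<Sum>t=0..n. (real n + real (Suc t)) * real (lah n (Suc t)) * X (Suc t)
        + real (lah n t) * X (Suc t))"
      by (intro sum.cong refl) (simp add: ring_distribs)
    finally show ?thesis by (simp add: sum.distrib)
  qed
  have B: "(\<Sum>t=0..n. (real n + real (Suc t)) * real (lah n (Suc t)) * X (Suc t))
     = (\<Sum>t=0..Suc n. (real n + real t) * real (lah n t) * X t)"
  proof -
    have z: "(real n + real 0) * real (lah n 0) * X 0 = 0"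
      using lah_zero[of n] by (metis add.right_neutral mult_eq_0_iff of_nat_0 of_nat_eq_0_iff)
    show ?thesis
      by (subst sum.atLeast0_atMost_Suc_shift) (use lah_zero[of n] in \<open>simp del: sum.cl_ivl_Suc\<close>)
  qed
  have C: "(\<Sum>t=0..Suc n. (real n + real t) * real (lah n t) * X t)
        = (\<Sum>t=0..n. (real n + real t) * real (lah n t) * X t)"
    by (simp add: lah_big)
  show ?thesis using A B C by (simp add: algebra_simps sum.distrib)
qed

lemma rel: "a * (a choose b) = b * (a choose b) + Suc b * (a choose Suc b)"
proof -
  have "Suc a * (a choose b) = (Suc a choose Suc b) * Suc b" by (rule Suc_times_binomial_eq)
  also have "\<dots> = ((a choose b) + (a choose Suc b)) * Suc b" by simp
  finally show ?thesis by (simp add: algebra_simps)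
qed
lemma key: "(a + Suc (Suc b) + 1) * (a choose Suc b) + Suc (Suc b) * (a choose b)
        = (a + 2) * (Suc a choose Suc b)"
proof -
  have "(Suc a choose Suc b) = (a choose b) + (a choose Suc b)" by simp
  then show ?thesis using rel[of a b] by (simp add: algebra_simps)
qed
lemma lah_closed: "n \<ge> 1 \<Longrightarrow> t \<ge> 1 \<Longrightarrow> lah n t * fact t = ((n-1) choose (t-1)) * fact n"
proof (induction n arbitrary: t rule: nat_induct_at_least)
  case base
  then obtain k where t: "t = Suc k" by (cases t) auto
  then show ?case by (cases k) auto
next
  case (Suc n)
  then obtain k where t: "t = Suc k" by (cases t) auto
  obtain a where a: "n = Suc a" using Suc.hyps by (cases n) auto
  have l0: "lah n 0 = 0" using a by simp
  show ?case
  proof (cases k)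
    case 0
    have "lah n (Suc 0) * fact (Suc 0) = (a choose 0) * fact n"
      using Suc.IH[of "Suc 0"] a by simp
    hence "lah n 1 = fact n" by simp
    then show ?thesis using l0 t 0 by simp
  next
    case (Suc b)
    have IH1: "lah n (Suc k) * fact (Suc k) = (a choose k) * fact n"
      using Suc.IH[of "Suc k"] a by simp
    have IH2: "lah n k * fact k = (a choose b) * fact n"
      using Suc.IH[of k] a Suc by simp
    have e1: "lah (Suc n) t * fact t
        = (n + Suc k) * (lah n (Suc k) * fact (Suc k)) + Suc k * (lah n k * fact k)"
      unfolding t lah.simps fact_Suc[of k] of_nat_id by (simp only: algebra_simps)
    have e2: "(n + Suc k) * (lah n (Suc k) * fact (Suc k)) + Suc k * (lah n k * fact k)
        = ((a + Suc (Suc b) + 1) * (a choose Suc b) + Suc (Suc b) * (a choose b)) * fact n"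
    proof -
      have "(n + Suc k) * (lah n (Suc k) * fact (Suc k)) + Suc k * (lah n k * fact k)
          = (n + Suc k) * ((a choose k) * fact n) + Suc k * ((a choose b) * fact n)"
        by (simp only: IH1 IH2)
      also have "\<dots> = ((a + Suc (Suc b) + 1) * (a choose Suc b) + Suc (Suc b) * (a choose b)) * fact n"
        unfolding a Suc by (simp add: algebra_simps del: fact_Suc)
      finally show ?thesis .
    qed
    have e3: "((a + Suc (Suc b) + 1) * (a choose Suc b) + Suc (Suc b) * (a choose b)) * fact n
        = (a + 2) * (Suc a choose Suc b) * fact n" by (simp only: key)
    have e4: "(Suc n - 1 choose (t - 1)) * fact (Suc n) = (n + 1) * (n choose k) * fact n"
      using t by (simp add: algebra_simps)
    show ?thesis using e1 e2 e3 e4 a Suc by simp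
  qed
qed
lemma lah_real: "n \<ge> 1 \<Longrightarrow> t \<ge> 1 \<Longrightarrow> real (lah n t) = real ((n-1) choose (t-1)) * fact n / fact t"
proof -
  assume "n \<ge> 1" "t \<ge> 1"
  hence "real (lah n t * fact t) = real (((n-1) choose (t-1)) * fact n)"
    using lah_closed by presburger
  thus ?thesis by (simp add: field_simps)
qed

lemma term_deriv:
  fixes h :: "real \<Rightarrow> real"
  assumes y: "y \<noteq> 0" and hd: "(h has_real_derivative h') (at (1/y))"
  shows "((\<lambda>z. (1/z)^k * h (1/z)) has_real_derivative
           (-(real k * (1/y)^(k+1) * h (1/y) + (1/y)^(k+2) * h'))) (at y)"
proof -
  have d1: "((\<lambda>z. 1/z) has_real_derivative -((1/y)^2)) (at y)"
    using DERIV_inverse[OF y] by (simp add: inverse_eq_divide power2_eq_square)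
  have d2: "((\<lambda>z. h (1/z)) has_real_derivative h' * -((1/y)^2)) (at y)"
    by (rule DERIV_chain2[OF hd d1])
  have d3: "((\<lambda>z. (1/z)^k) has_real_derivative real k * (-((1/y)^2) * (1/y)^(k - Suc 0))) (at y)"
    by (rule DERIV_power[OF d1])
  note d4 = DERIV_mult[OF d3 d2]
  show ?thesis
    by (rule DERIV_cong[OF d4]) (cases k; simp add: power2_eq_square algebra_simps)
qed

lemma main_deriv:
  fixes f :: "real \<Rightarrow> real"
  assumes H: "\<forall>n x. x \<noteq> 0 \<longrightarrow> (deriv ^^ n) f differentiable (at x)"
  shows "y \<noteq> 0 \<Longrightarrow> (deriv ^^ n) (\<lambda>y. f (1/y)) y
     = (-1)^n * (\<Sum>t=0..n. real (lah n t) * (1/y)^(n+t) * (deriv^^t) f (1/y))"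
proof (induction n arbitrary: y)
  case 0 then show ?case by simp
next
  case (Suc n)
  define F where "F = (\<lambda>z::real. (-1)^n * (\<Sum>t=0..n. real (lah n t) * ((1/z)^(n+t) * (deriv^^t) f (1/z))))"
  define u where "u = 1 / y"
  have u0: "u \<noteq> 0" using Suc.prems u_def by simp
  define X where "X = (\<lambda>t. u^(Suc n + t) * (deriv^^t) f u)"
  have hd: "((deriv^^t) f has_real_derivative (deriv^^Suc t) f u) (at u)" for t
    using H u0 by (simp add: DERIV_deriv_iff_real_differentiable)
  have DF: "(F has_real_derivative (-1)^n * (\<Sum>t=0..n. real (lah n t) *
      (-(real (n+t) * u^(n+t+1) * (deriv^^t) f u + u^(n+t+2) * (deriv^^Suc t) f u)))) (at y)"
    unfolding F_def u_def
    by (intro DERIV_cmult DERIV_sum term_deriv Suc.prems) (use hd u_def in simp)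
  have eq: "F z = (deriv ^^ n) (\<lambda>y. f (1/y)) z" if "z \<in> -{0}" for z
    using Suc.IH[of z] that by (simp add: F_def mult.assoc)
  have D2: "((deriv ^^ n) (\<lambda>y. f (1/y)) has_real_derivative (-1)^n * (\<Sum>t=0..n. real (lah n t) *
      (-(real (n+t) * u^(n+t+1) * (deriv^^t) f u + u^(n+t+2) * (deriv^^Suc t) f u)))) (at y)"
    by (rule has_field_derivative_transform_within_open[OF DF, of "-{0}"]) (use eq Suc.prems in auto)
  have "(deriv ^^ Suc n) (\<lambda>y. f (1/y)) y = deriv ((deriv ^^ n) (\<lambda>y. f (1/y))) y" by simp
  also have "\<dots> = (-1)^n * (\<Sum>t=0..n. real (lah n t) *
      (-(real (n+t) * u^(n+t+1) * (deriv^^t) f u + u^(n+t+2) * (deriv^^Suc t) f u)))"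
    by (rule DERIV_imp_deriv) (use D2 Suc.prems in simp)
  also have "\<dots> = (-1)^Suc n * (\<Sum>t=0..n. real (lah n t) * ((real n + real t) * X t + X (Suc t)))"
  proof -
    have "(\<Sum>t=0..n. real (lah n t) *
      (-(real (n+t) * u^(n+t+1) * (deriv^^t) f u + u^(n+t+2) * (deriv^^Suc t) f u)))
      = (\<Sum>t=0..n. - (real (lah n t) * ((real n + real t) * X t + X (Suc t))))"
      by (intro sum.cong refl) (simp add: X_def algebra_simps del: funpow.simps)
    then show ?thesis by (simp add: sum_negf del: funpow.simps)
  qed
  also have "\<dots> = (-1)^Suc n * (\<Sum>t=0..Suc n. real (lah (Suc n) t) * X t)"
    by (simp only: lah_shift)
  also have "\<dots> = (-1)^Suc n * (\<Sum>t=0..Suc n. real (lah (Suc n) t) * (1/y)^(Suc n+t) * (deriv^^t) f (1/y))"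
    by (simp add: X_def u_def mult.assoc del: sum.cl_ivl_Suc)
  finally show ?case .
qed

lemma acoef_closed:
  assumes "1 \<le> t" "t \<le> s"
  shows "acoef p m s t = real ((s - 1) choose (t - 1)) * fact (qd p m s) / fact (qd p m t)"
proof -
  obtain a where a: "s = Suc a" using assms by (cases s) auto
  obtain b where b: "t = Suc b" using assms by (cases t) auto
  have "Suc b * (Suc a choose Suc b) = Suc a * (a choose b)" by (rule Suc_times_binomial)
  hence "real (Suc b) * real (Suc a choose Suc b) = real (Suc a) * real (a choose b)"
    by (metis of_nat_mult)
  note h = this
  have "real (s choose t) * fact (s - 1) * fact t = fact a * fact b * (real (Suc b) * real (Suc a choose Suc b))"
    using a b by (simp add: algebra_simps del: binomial_Suc_Suc of_nat_Suc)
  also have "\<dots> = fact a * fact b * (real (Suc a) * real (a choose b))" by (simp only: h)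
  also have "\<dots> = real ((s-1) choose (t-1)) * fact s * fact (t - 1)"
    using a b by (simp add: algebra_simps del: binomial_Suc_Suc of_nat_Suc)
  finally have e: "real (s choose t) * fact (s - 1) * fact t = real ((s-1) choose (t-1)) * fact s * fact (t - 1)" .
  have nz: "fact s \<noteq> (0::real)" "fact (t-1) \<noteq> (0::real)" "fact (qd p m t) \<noteq> (0::real)" by auto
  show ?thesis unfolding acoef_def using e nz
    by (simp add: field_simps)
qed

lemma fact_quot_int:
  assumes "t \<le> s"
  shows "\<exists>c::nat. fact (qd p m s) / fact (qd p m t) = (real c :: real)"
proof -
  have "qd p m t \<le> qd p m s" unfolding qd_def using assms by (rule div_le_mono)
  hence "fact (qd p m t) dvd (fact (qd p m s) :: nat)" by (rule fact_dvd)
  then obtain c where c: "(fact (qd p m s) :: nat) = fact (qd p m t) * c" by blast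
  have "(fact (qd p m s) :: real) = fact (qd p m t) * real c"
    by (metis c of_nat_fact of_nat_mult)
  thus ?thesis by (intro exI[of _ c]) simp
qed



theorem mainTheorem11:
  fixes p m s :: nat
  assumes "prime p" and "s \<ge> 1"
  shows "(\<forall>f :: real \<Rightarrow> real.
            (\<forall>n x. x \<noteq> 0 \<longrightarrow> (deriv ^^ n) f differentiable (at x)) \<longrightarrow>
            (\<forall>x :: real. x \<noteq> 0 \<longrightarrow>
               dop p m s (\<lambda>y. f (1 / y)) (1 / x)
                 = (-1) ^ s * (\<Sum>t = 1..s. acoef p m s t * x ^ (s + t) * dop p m t f x)))
       \<and> (\<forall>t \<in> {1..s}. acoef p m s t
              = real ((s - 1) choose (t - 1)) * fact (qd p m s) / fact (qd p m t)
            \<and> acoef p m s t \<in> \<int>)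
       \<and> acoef p m s 1 = fact (qd p m s)
       \<and> acoef p m s s = 1"
proof -
  have P2: "\<forall>t \<in> {1..s}. acoef p m s t
              = real ((s - 1) choose (t - 1)) * fact (qd p m s) / fact (qd p m t)
            \<and> acoef p m s t \<in> \<int>"
  proof
    fix t assume t: "t \<in> {1..s}"
    have e: "acoef p m s t = real ((s - 1) choose (t - 1)) * fact (qd p m s) / fact (qd p m t)"
      using t acoef_closed by auto
    obtain c where c: "fact (qd p m s) / fact (qd p m t) = (real c :: real)"
      using fact_quot_int[of t s p m] t by auto
    have "acoef p m s t = real (((s - 1) choose (t - 1)) * c)"
      using e c by (simp add: times_divide_eq_right[symmetric] of_nat_mult del: times_divide_eq_right)
    hence "acoef p m s t \<in> \<int>" by (metis Ints_of_nat)
    thus "acoef p m s t = real ((s - 1) choose (t - 1)) * fact (qd p m s) / fact (qd p m t)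
            \<and> acoef p m s t \<in> \<int>" using e by simp
  qed
  have q1: "fact (qd p m 1) = (1::real)"
  proof -
    have "qd p m 1 \<le> 1" unfolding qd_def by (metis div_le_dividend)
    hence "qd p m 1 = 0 \<or> qd p m 1 = 1" by auto
    thus ?thesis by auto
  qed
  have P3: "acoef p m s 1 = fact (qd p m s)"
    using P2 assms(2) q1 by simp
  have P4: "acoef p m s s = 1"
    using P2 assms(2) by simp
  have P1: "\<forall>f :: real \<Rightarrow> real.
            (\<forall>n x. x \<noteq> 0 \<longrightarrow> (deriv ^^ n) f differentiable (at x)) \<longrightarrow>
            (\<forall>x :: real. x \<noteq> 0 \<longrightarrow>
               dop p m s (\<lambda>y. f (1 / y)) (1 / x)
                 = (-1) ^ s * (\<Sum>t = 1..s. acoef p m s t * x ^ (s + t) * dop p m t f x))"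
  proof (intro allI impI)
    fix f :: "real \<Rightarrow> real" and x :: real
    assume H: "\<forall>n x. x \<noteq> 0 \<longrightarrow> (deriv ^^ n) f differentiable (at x)" and x: "x \<noteq> 0"
    have md: "(deriv ^^ s) (\<lambda>y. f (1/y)) (1/x)
       = (-1)^s * (\<Sum>t=0..s. real (lah s t) * x^(s+t) * (deriv^^t) f x)"
      using main_deriv[OF H, of "1/x" s] x by simp
    have l0: "lah s 0 = 0" using assms(2) by (cases s) auto
    have sh: "(\<Sum>t=0..s. real (lah s t) * x^(s+t) * (deriv^^t) f x)
        = (\<Sum>t=1..s. real (lah s t) * x^(s+t) * (deriv^^t) f x)"
      using l0 by (simp add: sum.atLeast_Suc_atMost[of 0 s] assms(2))
    have "dop p m s (\<lambda>y. f (1 / y)) (1 / x)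
        = (-1)^s * (\<Sum>t=1..s. fact (qd p m s) / fact s * (real (lah s t) * x^(s+t) * (deriv^^t) f x))"
      unfolding dop_def md sh by (simp add: sum_distrib_left algebra_simps)
    also have "\<dots> = (-1) ^ s * (\<Sum>t = 1..s. acoef p m s t * x ^ (s + t) * dop p m t f x)"
    proof (intro arg_cong[where f="\<lambda>z. (-1)^s * z"] sum.cong refl)
      fix t assume t: "t \<in> {1..s}"
      have a: "acoef p m s t = real ((s - 1) choose (t - 1)) * fact (qd p m s) / fact (qd p m t)"
        using P2 t by blast
      have l: "real (lah s t) = real ((s-1) choose (t-1)) * fact s / fact t"
        using lah_real t by auto
      have nz: "fact s \<noteq> (0::real)" "fact t \<noteq> (0::real)" "fact (qd p m t) \<noteq> (0::real)" by auto
      show "fact (qd p m s) / fact s * (real (lah s t) * x ^ (s + t) * (deriv ^^ t) f x) =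
          acoef p m s t * x ^ (s + t) * dop p m t f x"
        unfolding a l dop_def using nz by (simp add: field_simps)
    qed
    finally show "dop p m s (\<lambda>y. f (1 / y)) (1 / x)
                 = (-1) ^ s * (\<Sum>t = 1..s. acoef p m s t * x ^ (s + t) * dop p m t f x)" .
  qed
  show ?thesis using P1 P2 P3 P4 by blast
qed

end
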